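(* Let $0<\epsilon<1$ and let $p=p(n)$ satisfy $0\le p(n)\le 1-\epsilon$ for all $n$. If $p(n)\sqrt{n}/\log n \to \infty$ as $n \to \infty$, then the probability that the random graph $G(n,p)$ is not Hamiltonian is $(1-p)^{(1+o(1))n}$ as $n\to\infty$.
   Context: $G(n,p)$ is the Erdős–Rényi random graph on $n$ vertices in which each pair of vertices is an edge independently with probability $p$. *)

theory Defs
  imports "HOL-Analysis.Analysis"
begin

text \<open>Simple graphs on the vertex set {0..<n}: an edge set is a set of 2-element
  subsets of {0..<n}.\<close>

definition all_edges :: "nat \<Rightarrow> nat set set" where
  "all_edges n = {e. \<exists>i j. i < j \<and> j < n \<and> e = {i, j}}"

definition hamiltonian :: "nat \<Rightarrow> nat set set \<Rightarrow> bool" where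
  "hamiltonian n E \<longleftrightarrow> 3 \<le> n \<and>
     (\<exists>f. bij_betw f {0..<n} {0..<n} \<and> (\<forall>i<n. {f i, f ((i + 1) mod n)} \<in> E))"

definition gnp_prob :: "nat \<Rightarrow> real \<Rightarrow> (nat set set \<Rightarrow> bool) \<Rightarrow> real" where
  "gnp_prob n p P = (\<Sum>E \<in> {E. E \<subseteq> all_edges n \<and> P E}.
      p ^ card E * (1 - p) ^ (card (all_edges n) - card E))"

end

theory Submission
  imports Defs
begin


fun gpath :: "nat set set \<Rightarrow> nat list \<Rightarrow> bool" where
  "gpath E [] = True"
| "gpath E [x] = True"
| "gpath E (x # y # xs) = ({x, y} \<in> E \<and> gpath E (y # xs))"

lemma gpath_Cons: "gpath E (x # xs) \<longleftrightarrow> gpath E xs \<and> (xs \<noteq> [] \<longrightarrow> {x, hd xs} \<in> E)"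
  by (cases xs) auto

lemma gpath_append:
  "gpath E (xs @ ys) \<longleftrightarrow> gpath E xs \<and> gpath E ys \<and> (xs \<noteq> [] \<and> ys \<noteq> [] \<longrightarrow> {last xs, hd ys} \<in> E)"
  by (induction xs) (auto simp: gpath_Cons)

lemma gpath_rev: "gpath E (rev xs) = gpath E xs"
  by (induction xs) (auto simp: gpath_append gpath_Cons last_rev insert_commute)

lemma gpath_take: "gpath E xs \<Longrightarrow> gpath E (take j xs)"
  by (metis append_take_drop_id gpath_append)

lemma gpath_drop: "gpath E xs \<Longrightarrow> gpath E (drop j xs)"
  by (metis append_take_drop_id gpath_append)

lemma gpath_nth: "gpath E xs \<Longrightarrow> Suc i < length xs \<Longrightarrow> {xs ! i, xs ! Suc i} \<in> E"
proof (induction xs arbitrary: i)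
  case Nil then show ?case by simp
next
  case (Cons a xs)
  then show ?case
    by (cases i) (auto simp: gpath_Cons hd_conv_nth)
qed

definition cyc :: "nat set set \<Rightarrow> nat list \<Rightarrow> bool" where
  "cyc E c \<longleftrightarrow> distinct c \<and> 3 \<le> length c \<and> gpath E c \<and> {last c, hd c} \<in> E"

lemma cyc_rotate1: "cyc E c \<Longrightarrow> cyc E (rotate1 c)"
proof -
  assume c: "cyc E c"
  then obtain a as where ca: "c = a # as" unfolding cyc_def by (cases c) auto
  with c have ne: "as \<noteq> []" unfolding cyc_def by auto
  then obtain b bs where as: "as = b # bs" by (cases as) auto
  show ?thesis using c ne unfolding cyc_def ca as
    by (auto simp: gpath_append gpath_Cons insert_commute hd_append)
qed

lemma cyc_rotate: "cyc E c \<Longrightarrow> cyc E (rotate j c)"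
  by (induction j) (auto simp: cyc_rotate1)

lemma cyc_ham:
  assumes c: "cyc E c" and len: "length c = n" and sub: "set c \<subseteq> {0..<n}"
  shows "hamiltonian n E"
proof -
  have n3: "3 \<le> n" using c len unfolding cyc_def by auto
  have dist: "distinct c" using c unfolding cyc_def by auto
  have setc: "set c = {0..<n}"
    using sub dist len by (metis atLeast0LessThan card_lessThan card_subset_eq distinct_card finite_lessThan)
  have bij: "bij_betw (\<lambda>i. c ! i) {0..<n} {0..<n}"
    unfolding bij_betw_def
  proof
    show "inj_on ((!) c) {0..<n}" using dist len by (simp add: inj_on_def nth_eq_iff_index_eq)
    show "(!) c ` {0..<n} = {0..<n}"
    proof -
      have "(!) c ` {0..<n} = set c" using len by (auto simp: set_conv_nth image_def)
      then show ?thesis using setc by simp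
    qed  
  qed
  have edges: "\<forall>i<n. {c ! i, c ! ((i + 1) mod n)} \<in> E"
  proof (intro allI impI)
    fix i assume i: "i < n"
    show "{c ! i, c ! ((i + 1) mod n)} \<in> E"
    proof (cases "Suc i < n")
      case True
      then show ?thesis using c len gpath_nth[of E c i] unfolding cyc_def by simp
    next
      case False
      then have si: "Suc i = n" using i by auto
      then have "i = n - 1" "(i + 1) mod n = 0" by auto
      moreover have "c \<noteq> []" using len n3 by auto
      then have "last c = c ! (n - 1)" "hd c = c ! 0" using len
        by (auto simp: last_conv_nth hd_conv_nth)
      ultimately show ?thesis using c unfolding cyc_def by simp
    qed
  qed
  show ?thesis unfolding hamiltonian_def using n3 bij edges by blast
qed



lemma walk_to_path:
  assumes "w \<noteq> []" "gpath E w"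
  shows "\<exists>P. P \<noteq> [] \<and> distinct P \<and> gpath E P \<and> hd P = hd w \<and> last P = last w \<and> set P \<subseteq> set w"
  using assms
proof (induction "length w" arbitrary: w rule: less_induct)
  case less
  show ?case
  proof (cases "distinct w")
    case True then show ?thesis using less.prems by blast
  next
    case False
    then obtain as y bs cs where w: "w = as @ [y] @ bs @ [y] @ cs"
      using not_distinct_decomp by blast
    define w' where "w' = as @ [y] @ cs"
    have g: "gpath E w'" using less.prems(2) unfolding w w'_def
      by (auto simp: gpath_append gpath_Cons)
    have "length w' < length w" unfolding w w'_def by simp
    moreover have "w' \<noteq> []" unfolding w'_def by simp
    ultimately obtain P where P: "P \<noteq> [] \<and> distinct P \<and> gpath E P \<and> hd P = hd w' \<and> last P = last w' \<and> set P \<subseteq> set w'"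
      using less.hyps g by blast
    have "hd w' = hd w" "last w' = last w" "set w' \<subseteq> set w" unfolding w w'_def
      by (cases as; auto; cases cs; auto)+
    then show ?thesis using P by auto
  qed
qed

lemma edge_props:
  assumes "E \<subseteq> all_edges n" "{a, b} \<in> E"
  shows "a \<noteq> b" "a < n" "b < n"
proof -
  from assms obtain i j where "i < j" "j < n" "{a, b} = {i, j}" unfolding all_edges_def by blast
  then show "a \<noteq> b" "a < n" "b < n" by (auto simp: doubleton_eq_iff)
qed

lemma gpath_set:
  assumes "E \<subseteq> all_edges n" "gpath E w" "hd w < n"
  shows "set w \<subseteq> {0..<n}"
  using assms(2,3)
proof (induction w)
  case Nil then show ?case by simp
next
  case (Cons a w)
  then show ?case using edge_props[OF assms(1)]
    by (cases w) (auto simp: gpath_Cons)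
qed



lemma two_elems: "finite N \<Longrightarrow> 2 \<le> card N \<Longrightarrow> \<exists>u w. u \<in> N \<and> w \<in> N \<and> u \<noteq> w"
  by (metis One_nat_def card_le_Suc0_iff_eq not_less_eq_eq numeral_2_eq_2)

lemma ham_crit:
  assumes E: "E \<subseteq> all_edges n" and n3: "3 \<le> n" and k2: "2 \<le> k"
    and I: "\<And>K. K \<subseteq> {0..<n} \<Longrightarrow> k \<le> card K \<Longrightarrow> \<exists>u\<in>K. \<exists>w\<in>K. {u, w} \<in> E"
    and S: "\<And>A S. A \<subseteq> {0..<n} \<Longrightarrow> S \<subseteq> {0..<n} \<Longrightarrow> A \<inter> S = {} \<Longrightarrow> A \<noteq> {} \<Longrightarrow>
              {0..<n} - A - S \<noteq> {} \<Longrightarrow> card S < k \<Longrightarrow> \<exists>a\<in>A. \<exists>b\<in>{0..<n} - A - S. {a, b} \<in> E"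
  shows "hamiltonian n E"
proof -
  define V where "V = {0..<(n::nat)}"
  have finV: "finite V" and cardV: "card V = n" unfolding V_def by auto
  have noloop: "{x, x} \<notin> E" for x using edge_props[OF E, of x x] by auto
  have eV: "a \<in> V" "b \<in> V" if "{a, b} \<in> E" for a b
    using edge_props[OF E that] unfolding V_def by auto
  have deg: "\<exists>u w. u \<noteq> w \<and> {v, u} \<in> E \<and> {v, w} \<in> E" if v: "v \<in> V" for v
  proof (rule ccontr)
    assume neg: "\<not> (\<exists>u w. u \<noteq> w \<and> {v, u} \<in> E \<and> {v, w} \<in> E)"
    define N where "N = {u. {v, u} \<in> E}"
    have NV: "N \<subseteq> V - {v}" using eV noloop unfolding N_def by auto
    have finN: "finite N" using NV finV finite_subset by blast
    have cardN: "card N < 2"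
    proof (rule ccontr)
      assume "\<not> card N < 2"
      then obtain u w where "u \<in> N" "w \<in> N" "u \<noteq> w" using two_elems[OF finN] by force
      then show False using neg unfolding N_def by auto
    qed
    have c1: "card (V - {v}) = n - 1" using v cardV finV by simp
    have "V - {v} - N \<noteq> {}"
    proof
      assume "V - {v} - N = {}"
      then have "V - {v} \<subseteq> N" by blast
      then have "card (V - {v}) \<le> card N" using finN card_mono by blast
      then show False using c1 cardN n3 by simp
    qed
    then have "{0..<n} - {v} - N \<noteq> {}" unfolding V_def .
    moreover have "{v} \<subseteq> {0..<n}" "N \<subseteq> {0..<n}" "{v} \<inter> N = {}" using v NV unfolding V_def by auto
    ultimately obtain a b where "a \<in> {v}" "b \<in> {0..<n} - {v} - N" "{a, b} \<in> E"
      using S[of "{v}" N] cardN k2 by force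
    then show False unfolding N_def by auto
  qed
  have excyc: "\<exists>c. cyc E c \<and> set c \<subseteq> V"
  proof -
    define PP where "PP = (\<lambda>P. P \<noteq> [] \<and> distinct P \<and> gpath E P \<and> set P \<subseteq> V)"
    have "PP [0]" using n3 unfolding PP_def V_def by auto
    moreover have "\<forall>P. PP P \<longrightarrow> length P < Suc n"
    proof (intro allI impI)
      fix P assume "PP P"
      then have "card (set P) = length P" "card (set P) \<le> card V"
        unfolding PP_def using distinct_card card_mono finV by auto
      then show "length P < Suc n" using cardV by simp
    qed
    ultimately obtain P where P: "PP P" and Pmax: "\<forall>Q. PP Q \<longrightarrow> length Q \<le> length P"
      using ex_has_greatest_nat[of PP "[0]" length "Suc n"] by blast
    then obtain v0 rest where Pv: "P = v0 # rest" unfolding PP_def by (cases P) auto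
    have nb: "u \<in> set P" if "{v0, u} \<in> E" for u
    proof (rule ccontr)
      assume un: "u \<notin> set P"
      have "PP (u # P)" using P un that eV unfolding PP_def
        by (auto simp: gpath_Cons Pv insert_commute)
      then show False using Pmax by fastforce
    qed
    have v0V: "v0 \<in> V" using P unfolding PP_def Pv by auto
    obtain u w where uw: "u \<noteq> w" "{v0, u} \<in> E" "{v0, w} \<in> E" using deg[OF v0V] by blast
    obtain iu where iu: "iu < length P" "P ! iu = u" using nb[OF uw(2)] by (auto simp: in_set_conv_nth)
    obtain iw where iw: "iw < length P" "P ! iw = w" using nb[OF uw(3)] by (auto simp: in_set_conv_nth)
    have "iu \<noteq> 0"
    proof
      assume "iu = 0" then have "u = v0" using iu Pv by simp
      then show False using uw(2) noloop by simp
    qed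
    moreover have "iw \<noteq> 0"
    proof
      assume "iw = 0" then have "w = v0" using iw Pv by simp
      then show False using uw(3) noloop by simp
    qed
    moreover have "iu \<noteq> iw" using iu iw uw by auto
    ultimately obtain j where j: "2 \<le> j" "j < length P" "{v0, P ! j} \<in> E"
      using iu iw uw by (metis One_nat_def less_2_cases not_less)
    define c where "c = take (Suc j) P"
    have "cyc E c"
      unfolding cyc_def
    proof (intro conjI)
      show "distinct c" using P unfolding PP_def c_def by simp
      show "3 \<le> length c" using j unfolding c_def by simp
      show "gpath E c" using P gpath_take unfolding PP_def c_def by blast
      have "last c = P ! j" unfolding c_def using j by (simp add: take_Suc_conv_app_nth)
      moreover have "hd c = v0" unfolding c_def Pv by simp
      ultimately show "{last c, hd c} \<in> E" using j by (simp add: insert_commute)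
    qed
    moreover have "set c \<subseteq> V" using P set_take_subset unfolding PP_def c_def by fastforce
    ultimately show ?thesis by blast
  qed


  define CC where "CC = (\<lambda>c. cyc E c \<and> set c \<subseteq> V)"
  have CCbound: "\<forall>c. CC c \<longrightarrow> length c < Suc n"
  proof (intro allI impI)
    fix c assume "CC c"
    then have "card (set c) = length c" "card (set c) \<le> card V"
      unfolding CC_def cyc_def using distinct_card card_mono finV by auto
    then show "length c < Suc n" using cardV by simp
  qed
  obtain c0 where "CC c0" using excyc unfolding CC_def by blast
  then obtain c where cC: "CC c" and cmax: "\<forall>c'. CC c' \<longrightarrow> length c' \<le> length c"
    using ex_has_greatest_nat[of CC c0 length "Suc n"] CCbound by blast
  have c: "cyc E c" and cV: "set c \<subseteq> V" using cC unfolding CC_def by auto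
  have cdist: "distinct c" and c3: "3 \<le> length c" and cg: "gpath E c" using c unfolding cyc_def by auto
  define m where "m = length c"
  have cardc: "card (set c) = m" using cdist distinct_card m_def by blast
  have mn: "m \<le> n" using cardc cV card_mono finV cardV by fastforce
  show ?thesis
  proof (cases "m = n")
    case True
    then show ?thesis using cyc_ham[OF c] cV m_def V_def by blast
  next
    case False
    then have "m < n" using mn by simp
    then have "\<not> V \<subseteq> set c" using cardc cardV card_mono by (metis List.finite_set not_le)
    then obtain v where vV: "v \<in> V" and vc: "v \<notin> set c" by blast

    define H where "H = {u. \<exists>w. w \<noteq> [] \<and> gpath E w \<and> hd w = v \<and> last w = u \<and> set w \<subseteq> V - set c}"
    have vH: "v \<in> H" unfolding H_def using vV vc by (intro CollectI exI[of _ "[v]"]) auto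
    have HV: "H \<subseteq> V - set c" unfolding H_def by (auto dest: last_in_set)
    have Hext: "z \<in> H" if "u \<in> H" "{u, z} \<in> E" "z \<notin> set c" for u z
    proof -
      from that(1) obtain w where w: "w \<noteq> [] \<and> gpath E w \<and> hd w = v \<and> last w = u \<and> set w \<subseteq> V - set c"
        unfolding H_def by blast
      have "w @ [z] \<noteq> [] \<and> gpath E (w @ [z]) \<and> hd (w @ [z]) = v \<and> last (w @ [z]) = z \<and> set (w @ [z]) \<subseteq> V - set c"
        using w that eV by (auto simp: gpath_append)
      then show ?thesis unfolding H_def by blast
    qed
    have Hwalk: "set w \<subseteq> H" if w: "w \<noteq> []" "gpath E w" "hd w = v" "set w \<subseteq> V - set c" for w
    proof
      fix x assume "x \<in> set w"
      then obtain i where i: "i < length w" "w ! i = x" by (auto simp: in_set_conv_nth)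
      define w' where "w' = take (Suc i) w"
      have a1: "w' \<noteq> []" unfolding w'_def using w by simp
      have a2: "gpath E w'" unfolding w'_def using w gpath_take by blast
      have a3: "hd w' = v" unfolding w'_def using w by simp
      have a4: "last w' = x" unfolding w'_def using i by (simp add: take_Suc_conv_app_nth)
      have a5: "set w' \<subseteq> V - set c" unfolding w'_def using w set_take_subset by (meson subset_trans)
      have "w' \<noteq> [] \<and> gpath E w' \<and> hd w' = v \<and> last w' = x \<and> set w' \<subseteq> V - set c"
        using a1 a2 a3 a4 a5 by blast
      then show "x \<in> H" unfolding H_def by blast
    qed
    have Hpath: "\<exists>P. P \<noteq> [] \<and> distinct P \<and> gpath E P \<and> hd P = h1 \<and> last P = h2 \<and> set P \<subseteq> H"
      if "h1 \<in> H" "h2 \<in> H" for h1 h2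
    proof -
      from that(1) obtain w1 where w1: "w1 \<noteq> [] \<and> gpath E w1 \<and> hd w1 = v \<and> last w1 = h1 \<and> set w1 \<subseteq> V - set c"
        unfolding H_def by blast
      from that(2) obtain w2 where w2: "w2 \<noteq> [] \<and> gpath E w2 \<and> hd w2 = v \<and> last w2 = h2 \<and> set w2 \<subseteq> V - set c"
        unfolding H_def by blast
      then obtain w2' where w2': "w2 = v # w2'" by (cases w2) auto
      define W where "W = rev w1 @ w2'"
      have g2: "gpath E w2'" "w2' \<noteq> [] \<longrightarrow> {v, hd w2'} \<in> E" using w2 w2' by (auto simp: gpath_Cons)
      have Wg: "gpath E W" unfolding W_def using w1 g2 by (auto simp: gpath_append gpath_rev last_rev)
      have Wne: "W \<noteq> []" unfolding W_def using w1 by simp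
      have Whd: "hd W = h1" unfolding W_def using w1 by (simp add: hd_rev)
      have Wlast: "last W = h2" unfolding W_def using w1 w2 w2' by (cases "w2' = []") (auto simp: last_rev)
      have Wset: "set W \<subseteq> H" unfolding W_def using Hwalk[of w1] Hwalk[of w2] w1 w2 w2' by auto
      show ?thesis using walk_to_path[OF Wne Wg] Whd Wlast Wset by fastforce
    qed
    have rot: "cyc E (rotate (Suc i) c) \<and> set (rotate (Suc i) c) = set c \<and> length (rotate (Suc i) c) = m \<and>
       (\<forall>l<m. rotate (Suc i) c ! l = c ! ((Suc i + l) mod m)) \<and> hd (rotate (Suc i) c) = c ! (Suc i mod m) \<and>
       last (rotate (Suc i) c) = c ! i" if i: "i < m" for i
    proof (intro conjI)
      show "cyc E (rotate (Suc i) c)" using cyc_rotate[OF c] .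
      show "set (rotate (Suc i) c) = set c" by simp
      show "length (rotate (Suc i) c) = m" using m_def by simp
      show nth: "\<forall>l<m. rotate (Suc i) c ! l = c ! ((Suc i + l) mod m)" using nth_rotate[of _ c "Suc i"] m_def by (auto simp del: rotate_Suc)
      have ne: "c \<noteq> []" using c3 by auto
      show "hd (rotate (Suc i) c) = c ! (Suc i mod m)" using hd_rotate_conv_nth[OF ne, of "Suc i"] m_def by (simp del: rotate_Suc)
      have "last (rotate (Suc i) c) = rotate (Suc i) c ! (m - 1)" using ne m_def by (simp add: last_conv_nth del: rotate_Suc)
      also have "\<dots> = c ! ((Suc i + (m - 1)) mod m)" using nth c3 m_def by (simp del: rotate_Suc)
      also have "(Suc i + (m - 1)) mod m = i"
      proof -
        have "Suc i + (m - 1) = i + m" using c3 m_def by simp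
        then show ?thesis using i by simp
      qed
      finally show "last (rotate (Suc i) c) = c ! i" .
    qed
    have Hc: "H \<inter> set c = {}" using HV by blast
    have mpos: "0 < m" using c3 m_def by auto
    define T where "T = {i. i < m \<and> (\<exists>h\<in>H. {c ! i, h} \<in> E)}"
    define s where "s = (\<lambda>i. Suc i mod m)"
    have sm: "s i < m" for i unfolding s_def m_def using c3 by (intro mod_less_divisor) linarith
    have claimA: "s i \<notin> T" if iT: "i \<in> T" for i
    proof
      assume siT: "s i \<in> T"
      from iT obtain hi where hi: "hi \<in> H" "{c ! i, hi} \<in> E" and im: "i < m" unfolding T_def by blast
      from siT obtain h' where h': "h' \<in> H" "{c ! s i, h'} \<in> E" unfolding T_def by blast
      obtain P where P: "P \<noteq> [] \<and> distinct P \<and> gpath E P \<and> hd P = hi \<and> last P = h' \<and> set P \<subseteq> H"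
        using Hpath[OF hi(1) h'(1)] by blast
      define c' where "c' = rotate (Suc i) c"
      note R = rot[OF im, folded c'_def]
      define D where "D = c' @ P"
      have "cyc E D" unfolding cyc_def
      proof (intro conjI)
        show "distinct D" unfolding D_def using R P Hc c unfolding cyc_def by auto
        show "3 \<le> length D" unfolding D_def using R c3 m_def by simp
        show "gpath E D" unfolding D_def using R P hi unfolding cyc_def s_def by (auto simp: gpath_append)
        have "c' \<noteq> []" using R c3 by auto
        then have "last D = h'" "hd D = c ! s i" unfolding D_def using R P unfolding s_def by auto
        then show "{last D, hd D} \<in> E" using h' by (simp add: insert_commute)
      qed
      moreover have "set D \<subseteq> V" unfolding D_def using R P HV cV by auto
      ultimately have "length D \<le> m" using cmax m_def unfolding CC_def by blast
      moreover have "length D > m" unfolding D_def using R P by simp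
      ultimately show False by simp
    qed
    have claimB: "{c ! s i, c ! s j} \<notin> E" if iT: "i \<in> T" and jT: "j \<in> T" and ij: "i \<noteq> j" for i j
    proof
      assume edge: "{c ! s i, c ! s j} \<in> E"
      from iT obtain hi where hi: "hi \<in> H" "{c ! i, hi} \<in> E" and im: "i < m" unfolding T_def by blast
      from jT obtain hj where hj: "hj \<in> H" "{c ! j, hj} \<in> E" and jm: "j < m" unfolding T_def by blast
      obtain P where P: "P \<noteq> [] \<and> distinct P \<and> gpath E P \<and> hd P = hj \<and> last P = hi \<and> set P \<subseteq> H"
        using Hpath[OF hj(1) hi(1)] by blast
      define c' where "c' = rotate (Suc i) c"
      note R = rot[OF im, folded c'_def]
      have "c ! j \<in> set c'" using R jm m_def by simp
      then have "\<exists>j'<length c'. c' ! j' = c ! j" by (simp only: in_set_conv_nth)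
      then obtain j' where j': "j' < m" "c' ! j' = c ! j" using R by metis
      have jj: "(Suc i + j') mod m = j"
      proof -
        have "c ! ((Suc i + j') mod m) = c ! j" using j' R by simp
        moreover have "(Suc i + j') mod m < m" using mpos by simp
        ultimately show ?thesis using cdist jm m_def nth_eq_iff_index_eq by blast
      qed
      have j'm: "j' \<noteq> m - 1"
      proof
        assume "j' = m - 1"
        then have "c' ! j' = last c'" using R mpos by (metis last_conv_nth list.size(3) less_not_refl2)
        then have "c ! j = c ! i" using R j' by simp
        then show False using ij cdist im jm m_def nth_eq_iff_index_eq by blast
      qed
      then have sj'm: "Suc j' < m" using j' by simp
      have csj: "c' ! Suc j' = c ! s j"
      proof -
        have "c' ! Suc j' = c ! (Suc (Suc i + j') mod m)" using R sj'm by simp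
        also have "Suc (Suc i + j') mod m = Suc ((Suc i + j') mod m) mod m" by (simp add: mod_Suc_eq)
        finally show ?thesis using jj unfolding s_def by simp
      qed
      define D where "D = take (Suc j') c' @ P @ rev (drop (Suc j') c')"
      have c'd: "distinct c'" and c'g: "gpath E c'" using R unfolding cyc_def by auto
      have lt: "last (take (Suc j') c') = c ! j" using j' R by (simp add: take_Suc_conv_app_nth)
      have ht: "hd (take (Suc j') c') = c ! s i" using R unfolding s_def by simp
      have dne: "drop (Suc j') c' \<noteq> []" using sj'm R by simp
      have ld: "last (drop (Suc j') c') = c ! i" using R sj'm by (simp add: last_drop)
      have hdd: "hd (drop (Suc j') c') = c ! s j" using R sj'm csj by (simp add: hd_drop_conv_nth)
      have "cyc E D" unfolding cyc_def
      proof (intro conjI)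
        have "set (take (Suc j') c') \<inter> set (drop (Suc j') c') = {}"
          using c'd by (simp add: set_take_disj_set_drop_if_distinct)
        moreover have "set P \<inter> set c' = {}" using P R Hc by auto
        ultimately show "distinct D" unfolding D_def using c'd P
          by (auto dest: in_set_takeD in_set_dropD)
        show "3 \<le> length D" unfolding D_def using R c3 m_def sj'm by simp
        show "gpath E D" unfolding D_def using P c'g hj hi lt ld dne
          by (auto simp: gpath_append gpath_rev gpath_take gpath_drop hd_rev last_rev insert_commute)
        have "last D = c ! s j" unfolding D_def using dne hdd by (simp add: last_rev)
        moreover have "take (Suc j') c' \<noteq> []" using sj'm R by auto
        then have "hd D = c ! s i" unfolding D_def using ht by simp
        ultimately show "{last D, hd D} \<in> E" using edge by (simp add: insert_commute)
      qed
      moreover have "set D \<subseteq> V" unfolding D_def using R P HV cV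
        by (auto dest: in_set_takeD in_set_dropD)
      ultimately have "length D \<le> m" using cmax m_def unfolding CC_def by blast
      moreover have "length D > m" unfolding D_def using R P sj'm by simp
      ultimately show False by simp
    qed
    have TM: "T \<subseteq> {..<m}" by (auto simp: T_def)
    have injc: "inj_on (\<lambda>i. c ! i) {..<m}" using cdist m_def by (simp add: inj_on_def nth_eq_iff_index_eq)
    have s_eq: "s i = (if Suc i = m then 0 else Suc i)" if "i < m" for i
      using that unfolding s_def by (simp add: mod_Suc)
    have injs: "inj_on s {..<m}"
    proof (rule inj_onI)
      fix x y assume "x \<in> {..<m}" "y \<in> {..<m}" "s x = s y"
      then show "x = y" using s_eq[of x] s_eq[of y] by (auto split: if_splits)
    qed
    have cnth: "c ! i \<in> set c" if "i < m" for i using that m_def by simp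
    define S0 where "S0 = (\<lambda>i. c ! i) ` T"
    have S0c: "S0 \<subseteq> set c" unfolding S0_def using TM cnth by auto
    have cardS0: "card S0 = card T" unfolding S0_def using card_image inj_on_subset[OF injc TM] by blast
    have B0: "V - H - S0 \<noteq> {}"
    proof (cases "T = {}")
      case True
      then have "c ! 0 \<in> V - H - S0" using cnth[OF mpos] cV Hc unfolding S0_def by auto
      then show ?thesis by blast
    next
      case False
      then obtain i where iT: "i \<in> T" by blast
      have "c ! s i \<notin> S0"
      proof
        assume "c ! s i \<in> S0"
        then obtain t where t: "t \<in> T" "c ! s i = c ! t" unfolding S0_def by blast
        then have "s i = t" using injc TM sm unfolding inj_on_def by blast
        then show False using claimA[OF iT] t by simp
      qed
      then have "c ! s i \<in> V - H - S0" using cnth[OF sm] cV Hc by auto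
      then show ?thesis by blast
    qed
    have kS0: "k \<le> card S0"
    proof (rule ccontr)
      assume "\<not> k \<le> card S0"
      then have "card S0 < k" by simp
      moreover have "H \<subseteq> {0..<n}" "S0 \<subseteq> {0..<n}" "H \<inter> S0 = {}" "H \<noteq> {}" "{0..<n} - H - S0 \<noteq> {}"
        using HV S0c cV vH B0 Hc unfolding V_def by auto
      ultimately obtain a b where ab: "a \<in> H" "b \<in> V - H - S0" "{a, b} \<in> E"
        using S[of H S0] unfolding V_def by blast
      show False
      proof (cases "b \<in> set c")
        case True
        then obtain t where t: "t < m" "c ! t = b" using m_def by (auto simp: in_set_conv_nth)
        then have "t \<in> T" using ab unfolding T_def by (auto simp: insert_commute)
        then have "b \<in> S0" using t unfolding S0_def by blast
        then show False using ab by blast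
      next
        case False
        then have "b \<in> H" using Hext ab by blast
        then show False using ab by blast
      qed
    qed
    define K where "K = insert v ((\<lambda>i. c ! s i) ` T)"
    have injcs: "inj_on (\<lambda>i. c ! s i) T"
    proof (rule inj_onI)
      fix x y assume xy: "x \<in> T" "y \<in> T" "c ! s x = c ! s y"
      then have "s x = s y" using injc sm unfolding inj_on_def by blast
      then show "x = y" using injs xy TM unfolding inj_on_def by blast
    qed
    have vnot: "v \<notin> (\<lambda>i. c ! s i) ` T" using vc cnth[OF sm] by auto
    have finT: "finite T" using TM finite_subset by blast
    have cardK: "card K = card T + 1" unfolding K_def using vnot finT card_image[OF injcs] by simp
    have KV: "K \<subseteq> {0..<n}" unfolding K_def using vV cV cnth[OF sm] unfolding V_def by auto
    obtain u w where uw: "u \<in> K" "w \<in> K" "{u, w} \<in> E"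
      using I[OF KV] cardK kS0 cardS0 by fastforce
    have notv: "{v, c ! s i} \<notin> E" if "i \<in> T" for i
    proof
      assume "{v, c ! s i} \<in> E"
      then have "s i \<in> T" using vH sm unfolding T_def by (auto simp: insert_commute)
      then show False using claimA[OF that] by simp
    qed
    show ?thesis
    proof (cases "u = v")
      case True
      then show ?thesis
      proof (cases "w = v")
        case True then show ?thesis using uw \<open>u = v\<close> noloop by simp
      next
        case False
        then obtain j where "j \<in> T" "w = c ! s j" using uw unfolding K_def by auto
        then show ?thesis using notv uw \<open>u = v\<close> by blast
      qed
    next
      case False
      then obtain i where i: "i \<in> T" "u = c ! s i" using uw unfolding K_def by auto
      show ?thesis
      proof (cases "w = v")
        case True then show ?thesis using notv[OF i(1)] uw i by (simp add: insert_commute)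
      next
        case False
        then obtain j where j: "j \<in> T" "w = c ! s j" using uw unfolding K_def by auto
        show ?thesis
        proof (cases "i = j")
          case True then show ?thesis using uw i j noloop by simp
        next
          case False then show ?thesis using claimB[OF i(1) j(1)] uw i j by simp
        qed
      qed
    qed
  qed
qed



lemma all_edges_alt: "all_edges n = {e. e \<subseteq> {0..<n} \<and> card e = 2}"
proof
  show "all_edges n \<subseteq> {e. e \<subseteq> {0..<n} \<and> card e = 2}"
    unfolding all_edges_def by auto
  show "{e. e \<subseteq> {0..<n} \<and> card e = 2} \<subseteq> all_edges n"
  proof
    fix e assume "e \<in> {e. e \<subseteq> {0..<n} \<and> card e = 2}"
    then obtain x y where xy: "e = {x, y}" "x \<noteq> y" "e \<subseteq> {0..<n}" by (auto simp: card_2_iff)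
    show "e \<in> all_edges n"
    proof (cases "x < y")
      case True then show ?thesis using xy unfolding all_edges_def by auto
    next
      case False then have "y < x" using xy by simp
      then show ?thesis using xy unfolding all_edges_def by (auto simp: insert_commute)
    qed
  qed
qed

lemma finite_all_edges: "finite (all_edges n)"
  unfolding all_edges_alt by (rule finite_subset[of _ "Pow {0..<n}"]) auto

lemma finite_edges_sub: "finite {E. E \<subseteq> all_edges n \<and> P E}"
  using finite_all_edges by auto

lemma gnp_nonneg_term:
  fixes p :: real
  assumes "0 \<le> p" "p \<le> 1"
  shows "0 \<le> p ^ card E * (1 - p) ^ (card (all_edges n) - card E)"
  using assms by simp

lemma gnp_avoid:
  assumes F: "F \<subseteq> all_edges n"
  shows "gnp_prob n p (\<lambda>E. E \<inter> F = {}) = (1 - p) ^ card F"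
proof -
  define N where "N = all_edges n"
  define M where "M = N - F"
  have finN: "finite N" unfolding N_def by (rule finite_all_edges)
  have finM: "finite M" using finN M_def by simp
  have cN: "card N = card F + card M" unfolding M_def using F finN N_def
    by (metis card_Diff_subset card_mono finite_subset le_add_diff_inverse)
  have set_eq: "{E. E \<subseteq> N \<and> E \<inter> F = {}} = Pow M" unfolding M_def by auto
  have "gnp_prob n p (\<lambda>E. E \<inter> F = {}) = (\<Sum>E\<in>Pow M. p ^ card E * (1 - p) ^ (card N - card E))"
    unfolding gnp_prob_def N_def[symmetric] set_eq ..
  also have "\<dots> = (\<Sum>E\<in>Pow M. (1 - p) ^ card F * (p ^ card E * (1 - p) ^ (card M - card E)))"
  proof (rule sum.cong[OF refl])
    fix E assume "E \<in> Pow M"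
    then have "card E \<le> card M" using finM card_mono by auto
    then have "card N - card E = card F + (card M - card E)" using cN by simp
    then show "p ^ card E * (1 - p) ^ (card N - card E) = (1 - p) ^ card F * (p ^ card E * (1 - p) ^ (card M - card E))"
      by (simp add: power_add)
  qed
  also have "\<dots> = (1 - p) ^ card F * (\<Sum>E\<in>Pow M. p ^ card E * (1 - p) ^ (card M - card E))"
    by (simp add: sum_distrib_left)
  also have "(\<Sum>E\<in>Pow M. p ^ card E * (1 - p) ^ (card M - card E)) = (\<Prod>x\<in>M. p + (1 - p))"
  proof -
    have "(\<Prod>x\<in>M. p + (1 - p)) = (\<Sum>X\<in>Pow M. (\<Prod>x\<in>X. p) * (\<Prod>x\<in>M - X. (1 - p)))"
      by (rule prod_add[OF finM])
    also have "\<dots> = (\<Sum>X\<in>Pow M. p ^ card X * (1 - p) ^ (card M - card X))"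
    proof (rule sum.cong[OF refl])
      fix X assume "X \<in> Pow M"
      then have "card (M - X) = card M - card X" using finM by (simp add: card_Diff_subset finite_subset)
      then show "(\<Prod>x\<in>X. p) * (\<Prod>x\<in>M - X. (1 - p)) = p ^ card X * (1 - p) ^ (card M - card X)" by simp
    qed
    finally show ?thesis by simp
  qed
  also have "(\<Prod>x\<in>M. p + (1 - p)) = 1" by simp
  finally show ?thesis by simp
qed

lemma gnp_cond: "gnp_prob n p (\<lambda>E. C \<and> P E) = (if C then gnp_prob n p P else 0)"
  unfolding gnp_prob_def by auto

lemma gnp_mono:
  assumes "0 \<le> p" "p \<le> 1" "\<And>E. E \<subseteq> all_edges n \<Longrightarrow> P E \<Longrightarrow> Q E"
  shows "gnp_prob n p P \<le> gnp_prob n p Q"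
  unfolding gnp_prob_def
  by (rule sum_mono2[OF finite_edges_sub]) (use assms in auto)

lemma sum_UN_le_nonneg:
  fixes f :: "'a \<Rightarrow> real"
  assumes "finite I" "\<And>i. i \<in> I \<Longrightarrow> finite (A i)" "\<And>x. 0 \<le> f x"
  shows "sum f (\<Union>i\<in>I. A i) \<le> (\<Sum>i\<in>I. sum f (A i))"
  using assms(1,2)
proof (induction I rule: finite_induct)
  case empty then show ?case by simp
next
  case (insert i I)
  have fin: "finite (A i)" "finite (\<Union>j\<in>I. A j)" using insert by auto
  have "sum f (\<Union>j\<in>insert i I. A j) = sum f (A i \<union> (\<Union>j\<in>I. A j))" by simp
  also have "\<dots> = sum f (A i) + sum f (\<Union>j\<in>I. A j) - sum f (A i \<inter> (\<Union>j\<in>I. A j))"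
    using sum_Un[OF fin] by simp
  also have "\<dots> \<le> sum f (A i) + sum f (\<Union>j\<in>I. A j)"
    using assms(3) by (simp add: sum_nonneg)
  also have "\<dots> \<le> sum f (A i) + (\<Sum>j\<in>I. sum f (A j))" using insert by simp
  finally show ?case using insert by simp
qed

lemma gnp_union:
  assumes p: "0 \<le> p" "p \<le> 1" and I: "finite I"
    and cov: "\<And>E. E \<subseteq> all_edges n \<Longrightarrow> P E \<Longrightarrow> \<exists>i\<in>I. Q i E"
  shows "gnp_prob n p P \<le> (\<Sum>i\<in>I. gnp_prob n p (Q i))"
proof -
  define w :: "nat set set \<Rightarrow> real" where "w = (\<lambda>E. p ^ card E * (1 - p) ^ (card (all_edges n) - card E))"
  have w0: "0 \<le> w E" for E unfolding w_def using p by simp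
  have "gnp_prob n p P = sum w {E. E \<subseteq> all_edges n \<and> P E}" unfolding gnp_prob_def w_def ..
  also have "\<dots> \<le> sum w (\<Union>i\<in>I. {E. E \<subseteq> all_edges n \<and> Q i E})"
    by (rule sum_mono2) (use I finite_edges_sub cov w0 in auto)
  also have "\<dots> \<le> (\<Sum>i\<in>I. sum w {E. E \<subseteq> all_edges n \<and> Q i E})"
    by (rule sum_UN_le_nonneg) (use I finite_edges_sub w0 in auto)
  also have "\<dots> = (\<Sum>i\<in>I. gnp_prob n p (Q i))" unfolding gnp_prob_def w_def ..
  finally show ?thesis .
qed

lemma gnp_or:
  assumes p: "0 \<le> p" "p \<le> 1"
  shows "gnp_prob n p (\<lambda>E. P E \<or> Q E) \<le> gnp_prob n p P + gnp_prob n p Q"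
proof -
  have "gnp_prob n p (\<lambda>E. P E \<or> Q E) \<le> (\<Sum>i\<in>{True, False}. gnp_prob n p (if i then P else Q))"
    by (rule gnp_union[OF p]) auto
  then show ?thesis by simp
qed



lemma indep_bound:
  fixes p :: real
  assumes p: "0 \<le> p" "p \<le> 1"
  shows "gnp_prob n p (\<lambda>E. \<exists>K. K \<subseteq> {0..<n} \<and> k \<le> card K \<and> (\<forall>u\<in>K. \<forall>w\<in>K. {u, w} \<notin> E))
         \<le> real (n choose k) * (1 - p) ^ (k choose 2)"
proof -
  define KK where "KK = {K. K \<subseteq> {0..<n} \<and> card K = k}"
  define FK where "FK = (\<lambda>K::nat set. {e. e \<subseteq> K \<and> card e = 2})"
  have finKK: "finite KK" unfolding KK_def by (rule finite_subset[of _ "Pow {0..<n}"]) auto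
  have "gnp_prob n p (\<lambda>E. \<exists>K. K \<subseteq> {0..<n} \<and> k \<le> card K \<and> (\<forall>u\<in>K. \<forall>w\<in>K. {u, w} \<notin> E))
        \<le> (\<Sum>K\<in>KK. gnp_prob n p (\<lambda>E. E \<inter> FK K = {}))"
  proof (rule gnp_union[OF p finKK])
    fix E assume EN: "E \<subseteq> all_edges n" and "\<exists>K. K \<subseteq> {0..<n} \<and> k \<le> card K \<and> (\<forall>u\<in>K. \<forall>w\<in>K. {u, w} \<notin> E)"
    then obtain K0 where K0: "K0 \<subseteq> {0..<n}" "k \<le> card K0" "\<forall>u\<in>K0. \<forall>w\<in>K0. {u, w} \<notin> E" by blast
    obtain K where K: "K \<subseteq> K0" "card K = k" using obtain_subset_with_card_n[OF K0(2)] by metis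
    have "K \<in> KK" using K K0 unfolding KK_def by auto
    moreover have "E \<inter> FK K = {}"
    proof (rule ccontr)
      assume "E \<inter> FK K \<noteq> {}"
      then obtain e where e: "e \<in> E" "e \<subseteq> K" "card e = 2" unfolding FK_def by blast
      then obtain x y where "e = {x, y}" by (auto simp: card_2_iff)
      then show False using e K K0 by auto
    qed
    ultimately show "\<exists>K\<in>KK. E \<inter> FK K = {}" by blast
  qed
  also have "\<dots> = (\<Sum>K\<in>KK. (1 - p) ^ (k choose 2))"
  proof (rule sum.cong[OF refl])
    fix K assume "K \<in> KK"
    then have K: "K \<subseteq> {0..<n}" "card K = k" "finite K" unfolding KK_def by (auto intro: finite_subset)
    have "FK K \<subseteq> all_edges n" unfolding FK_def all_edges_alt using K by auto
    moreover have "card (FK K) = k choose 2" unfolding FK_def using n_subsets[OF K(3), of 2] K by simp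
    ultimately show "gnp_prob n p (\<lambda>E. E \<inter> FK K = {}) = (1 - p) ^ (k choose 2)"
      using gnp_avoid by metis
  qed
  also have "\<dots> = real (card KK) * (1 - p) ^ (k choose 2)" by simp
  also have "card KK = n choose k" unfolding KK_def using n_subsets[of "{0..<n}" k] by simp
  finally show ?thesis .
qed

definition FAB :: "nat set \<Rightarrow> nat set \<Rightarrow> nat set set" where
  "FAB A B = (\<lambda>(a, b). {a, b}) ` (A \<times> B)"

lemma card_FAB:
  assumes "A \<inter> B = {}" "finite A" "finite B"
  shows "card (FAB A B) = card A * card B"
proof -
  have "inj_on (\<lambda>(a, b). {a, b}) (A \<times> B)"
  proof (rule inj_onI)
    fix x y assume xy: "x \<in> A \<times> B" "y \<in> A \<times> B" "(\<lambda>(a, b). {a, b::nat}) x = (\<lambda>(a, b). {a, b}) y"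
    then show "x = y" using assms(1) by (auto simp: doubleton_eq_iff)
  qed
  then show ?thesis unfolding FAB_def using card_image card_cartesian_product by metis
qed

lemma FAB_sub:
  assumes "A \<inter> B = {}" "A \<subseteq> {0..<n}" "B \<subseteq> {0..<n}"
  shows "FAB A B \<subseteq> all_edges n"
  unfolding FAB_def all_edges_alt using assms by (auto simp: card_2_iff) blast

lemma exp_ineq:
  fixes a' b n k h s :: nat
  assumes "n - k + 1 \<le> Suc a' + b" "h + 1 \<le> b"
  shows "n - k + a' * h \<le> Suc a' * b"
proof -
  have "Suc a' * b = a' * b + b" by simp
  moreover have "a' * b \<ge> a' * (h + 1)" using assms(2) by (intro mult_le_mono2) simp
  ultimately show ?thesis using assms(1) by (simp add: algebra_simps)
qed

lemma pow_set_sum: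
  fixes x :: real
  assumes "finite V"
  shows "(\<Sum>X\<in>Pow V. x ^ card X) = (1 + x) ^ card V"
proof -
  have "(\<Prod>v\<in>V. x + 1) = (\<Sum>X\<in>Pow V. (\<Prod>v\<in>X. x) * (\<Prod>v\<in>V - X. 1))"
    by (rule prod_add[OF assms])
  then show ?thesis by (simp add: add.commute)
qed

lemma sep_bound:
  fixes p :: real and n k :: nat
  assumes p: "0 \<le> p" "p \<le> 1"
  defines "V \<equiv> {0..<n}"
  defines "SS \<equiv> {S. S \<subseteq> {0..<n} \<and> card S < k}"
  defines "h \<equiv> (n - k) div 2 - 1"
  shows "gnp_prob n p (\<lambda>E. \<exists>A S. A \<subseteq> V \<and> S \<subseteq> V \<and> A \<inter> S = {} \<and> A \<noteq> {} \<and> V - A - S \<noteq> {} \<and> card S < k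
            \<and> (\<forall>a\<in>A. \<forall>b\<in>V - A - S. {a, b} \<notin> E))
     \<le> real n * (1 + (1 - p) ^ h) ^ n * real (card SS) * (1 - p) ^ (n - k)"
proof -
  define q where "q = 1 - p"
  have q: "0 \<le> q" "q \<le> 1" using p q_def by auto
  define x where "x = q ^ h"
  define J where "J = V \<times> (Pow V \<times> SS)"
  define CC where "CC = (\<lambda>(v, A', S). v \<notin> A' \<and> insert v A' \<inter> S = {} \<and> card (insert v A') \<le> card (V - insert v A' - S))"
  define FF where "FF = (\<lambda>(v, A', S). FAB (insert v A') (V - insert v A' - S))"
  have finV: "finite V" unfolding V_def by simp
  have finSS: "finite SS" unfolding SS_def by (rule finite_subset[of _ "Pow {0..<n}"]) auto
  have finJ: "finite J" unfolding J_def using finV finSS by simp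
  have "gnp_prob n p (\<lambda>E. \<exists>A S. A \<subseteq> V \<and> S \<subseteq> V \<and> A \<inter> S = {} \<and> A \<noteq> {} \<and> V - A - S \<noteq> {} \<and> card S < k
            \<and> (\<forall>a\<in>A. \<forall>b\<in>V - A - S. {a, b} \<notin> E))
        \<le> (\<Sum>j\<in>J. gnp_prob n p (\<lambda>E. CC j \<and> E \<inter> FF j = {}))"
  proof (rule gnp_union[OF p finJ])
    fix E assume "\<exists>A S. A \<subseteq> V \<and> S \<subseteq> V \<and> A \<inter> S = {} \<and> A \<noteq> {} \<and> V - A - S \<noteq> {} \<and> card S < k
            \<and> (\<forall>a\<in>A. \<forall>b\<in>V - A - S. {a, b} \<notin> E)"
    then obtain A S where AS: "A \<subseteq> V" "S \<subseteq> V" "A \<inter> S = {}" "A \<noteq> {}" "V - A - S \<noteq> {}" "card S < k"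
      "\<forall>a\<in>A. \<forall>b\<in>V - A - S. {a, b} \<notin> E" by blast
    obtain A2 where A2: "A2 \<subseteq> V" "A2 \<inter> S = {}" "A2 \<noteq> {}" "card A2 \<le> card (V - A2 - S)"
      "\<forall>a\<in>A2. \<forall>b\<in>V - A2 - S. {a, b} \<notin> E"
    proof (cases "card A \<le> card (V - A - S)")
      case True then show ?thesis using that AS by blast
    next
      case False
      define B where "B = V - A - S"
      have BA: "V - B - S = A" unfolding B_def using AS by auto
      show ?thesis
      proof (rule that[of B])
        show "B \<subseteq> V" "B \<inter> S = {}" "B \<noteq> {}" unfolding B_def using AS by auto
        show "card B \<le> card (V - B - S)" using BA False B_def by simp
        show "\<forall>a\<in>B. \<forall>b\<in>V - B - S. {a, b} \<notin> E" using BA AS(7) B_def by (metis Diff_iff insert_commute)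
      qed
    qed
    then obtain v where v: "v \<in> A2" by blast
    define A' where "A' = A2 - {v}"
    have iA: "insert v A' = A2" unfolding A'_def using v by auto
    have "(v, A', S) \<in> J" unfolding J_def SS_def V_def using v A2 AS A'_def V_def by auto
    moreover have "CC (v, A', S)" unfolding CC_def using iA A2 A'_def by auto
    moreover have "E \<inter> FF (v, A', S) = {}" unfolding FF_def FAB_def using iA A2 by auto
    ultimately show "\<exists>j\<in>J. CC j \<and> E \<inter> FF j = {}" by blast
  qed
  also have "\<dots> \<le> (\<Sum>j\<in>J. q ^ (n - k) * x ^ card (fst (snd j)))"
  proof (rule sum_mono)
    fix j assume "j \<in> J"
    then obtain v A' S where j: "j = (v, A', S)" "v \<in> V" "A' \<subseteq> V" "S \<in> SS" unfolding J_def by auto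
    show "gnp_prob n p (\<lambda>E. CC j \<and> E \<inter> FF j = {}) \<le> q ^ (n - k) * x ^ card (fst (snd j))"
    proof (cases "CC j")
      case False then show ?thesis unfolding gnp_cond using q x_def by simp
    next
      case True
      define A where "A = insert v A'"
      define B where "B = V - A - S"
      have C: "v \<notin> A'" "A \<inter> S = {}" "card A \<le> card B" using True unfolding CC_def j A_def B_def by auto
      have AB: "A \<inter> B = {}" "A \<subseteq> V" "B \<subseteq> V" unfolding A_def B_def using j by auto
      have finA': "finite A'" using j finV finite_subset by blast
      have finS: "finite S" using j finV finite_subset unfolding SS_def V_def by blast
      have cA: "card A = Suc (card A')" unfolding A_def using C finA' by simp
      have cS: "card S < k" "S \<subseteq> V" using j unfolding SS_def V_def by auto
      have part: "card A + card B + card S = n"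
      proof -
        have "V = (A \<union> B) \<union> S" unfolding B_def using AB cS by auto
        moreover have "(A \<union> B) \<inter> S = {}" using C B_def by auto
        ultimately have "card V = card (A \<union> B) + card S"
          using finV by (metis card_Un_disjoint finite_Un)
        moreover have "card (A \<union> B) = card A + card B"
          using AB finV by (meson card_Un_disjoint finite_subset)
        ultimately show ?thesis unfolding V_def by simp
      qed
      have e1: "n - k + 1 \<le> Suc (card A') + card B" using part cA cS C by linarith
      have d2: "2 * ((n - k) div 2) \<le> n - k" by simp
      have e2: "h + 1 \<le> card B" unfolding h_def using d2 part cA cS C by linarith
      have ex: "n - k + card A' * h \<le> card A * card B" using exp_ineq[OF e1 e2] cA by simp
      have "gnp_prob n p (\<lambda>E. CC j \<and> E \<inter> FF j = {}) = q ^ card (FF j)"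
        unfolding gnp_cond using True gnp_avoid[OF FAB_sub[OF AB(1) AB(2)[unfolded V_def] AB(3)[unfolded V_def]]]
        unfolding FF_def j A_def B_def q_def by simp
      also have "card (FF j) = card A * card B" unfolding FF_def j
        using card_FAB[OF AB(1)] finV AB finite_subset unfolding A_def B_def by (metis case_prod_conv)
      also have "q ^ (card A * card B) \<le> q ^ (n - k + card A' * h)"
        using ex q by (simp add: power_decreasing)
      also have "\<dots> = q ^ (n - k) * x ^ card (fst (snd j))" unfolding x_def j
        by (simp add: power_add power_mult mult.commute)
      finally show ?thesis .
    qed
  qed
  also have "\<dots> = (\<Sum>v\<in>V. \<Sum>A'\<in>Pow V. \<Sum>S\<in>SS. q ^ (n - k) * x ^ card A')"
  proof -
    have "(\<Sum>v\<in>V. \<Sum>A'\<in>Pow V. \<Sum>S\<in>SS. q ^ (n - k) * x ^ card A')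
        = (\<Sum>v\<in>V. \<Sum>r\<in>Pow V \<times> SS. q ^ (n - k) * x ^ card (fst r))"
      by (intro sum.cong refl) (simp only: sum.cartesian_product split_def)
    also have "\<dots> = (\<Sum>j\<in>J. q ^ (n - k) * x ^ card (fst (snd j)))"
      unfolding J_def by (simp only: sum.cartesian_product split_def fst_conv snd_conv)
    finally show ?thesis by simp
  qed
  also have "\<dots> = real (card V) * (real (card SS) * q ^ (n - k) * (\<Sum>A'\<in>Pow V. x ^ card A'))"
    by (simp add: sum_distrib_left mult.commute mult.left_commute)
  also have "(\<Sum>A'\<in>Pow V. x ^ card A') = (1 + x) ^ n" using pow_set_sum[OF finV] unfolding V_def by simp
  finally show ?thesis unfolding V_def x_def q_def by (simp add: mult.commute mult.left_commute)
qed



lemma card_SS: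
  assumes "1 \<le> n"
  shows "card {S. S \<subseteq> {0..<n} \<and> card S < k} \<le> k * n ^ k"
proof -
  have eq: "{S. S \<subseteq> {0..<n} \<and> card S < k} = (\<Union>s\<in>{..<k}. {S. S \<subseteq> {0..<n} \<and> card S = s})" by auto
  have "card {S. S \<subseteq> {0..<n} \<and> card S < k} \<le> (\<Sum>s\<in>{..<k}. card {S. S \<subseteq> {0..<n} \<and> card S = s})"
    unfolding eq by (rule card_UN_le) simp
  also have "\<dots> = (\<Sum>s\<in>{..<k}. n choose s)" using n_subsets[of "{0..<n}"] by simp
  also have "\<dots> \<le> (\<Sum>s\<in>{..<k}. n ^ k)"
  proof (rule sum_mono)
    fix s assume s: "s \<in> {..<k}"
    have "n choose s \<le> n ^ s"
      by (cases "s \<le> n") (auto simp: binomial_le_pow binomial_eq_0)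
    also have "n ^ s \<le> n ^ k" using s assms by (intro power_increasing) auto
    finally show "n choose s \<le> n ^ k" .
  qed
  also have "\<dots> = k * n ^ k" by simp
  finally show ?thesis .
qed

lemma upper_bound:
  fixes p :: real and n k :: nat
  assumes p: "0 \<le> p" "p \<le> 1" and n3: "3 \<le> n" and k2: "2 \<le> k"
  shows "gnp_prob n p (\<lambda>E. \<not> hamiltonian n E)
    \<le> real n ^ k * (1 - p) ^ (k choose 2)
      + real n * (1 + (1 - p) ^ ((n - k) div 2 - 1)) ^ n * (real k * real n ^ k) * (1 - p) ^ (n - k)"
proof -
  define V where "V = {0..<n}"
  define Ind where "Ind = (\<lambda>E. \<exists>K. K \<subseteq> {0..<n} \<and> k \<le> card K \<and> (\<forall>u\<in>K. \<forall>w\<in>K. {u, w} \<notin> E))"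
  define Sep where "Sep = (\<lambda>E. \<exists>A S. A \<subseteq> V \<and> S \<subseteq> V \<and> A \<inter> S = {} \<and> A \<noteq> {} \<and> V - A - S \<noteq> {} \<and> card S < k
            \<and> (\<forall>a\<in>A. \<forall>b\<in>V - A - S. {a, b} \<notin> E))"
  have q: "0 \<le> 1 - p" "1 - p \<le> 1" using p by auto
  have "gnp_prob n p (\<lambda>E. \<not> hamiltonian n E) \<le> gnp_prob n p (\<lambda>E. Ind E \<or> Sep E)"
  proof (rule gnp_mono[OF p])
    fix E assume E: "E \<subseteq> all_edges n" and nh: "\<not> hamiltonian n E"
    show "Ind E \<or> Sep E"
    proof (rule ccontr)
      assume ns: "\<not> (Ind E \<or> Sep E)"
      have I: "\<And>K. K \<subseteq> {0..<n} \<Longrightarrow> k \<le> card K \<Longrightarrow> \<exists>u\<in>K. \<exists>w\<in>K. {u, w} \<in> E"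
        using ns unfolding Ind_def by blast
      have S: "\<And>A S. A \<subseteq> {0..<n} \<Longrightarrow> S \<subseteq> {0..<n} \<Longrightarrow> A \<inter> S = {} \<Longrightarrow> A \<noteq> {} \<Longrightarrow>
              {0..<n} - A - S \<noteq> {} \<Longrightarrow> card S < k \<Longrightarrow> \<exists>a\<in>A. \<exists>b\<in>{0..<n} - A - S. {a, b} \<in> E"
        using ns unfolding Sep_def V_def by blast
      have h: "hamiltonian n E" by (rule ham_crit[OF E n3 k2 I S])
      then show False using nh by simp
    qed
  qed
  also have "\<dots> \<le> gnp_prob n p Ind + gnp_prob n p Sep" by (rule gnp_or[OF p])
  finally have main: "gnp_prob n p (\<lambda>E. \<not> hamiltonian n E) \<le> gnp_prob n p Ind + gnp_prob n p Sep" .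
  have b1: "gnp_prob n p Ind \<le> real n ^ k * (1 - p) ^ (k choose 2)"
  proof -
    have "gnp_prob n p Ind \<le> real (n choose k) * (1 - p) ^ (k choose 2)"
      unfolding Ind_def by (rule indep_bound[OF p])
    also have "real (n choose k) \<le> real n ^ k"
    proof -
      have "n choose k \<le> n ^ k" by (cases "k \<le> n") (auto simp: binomial_le_pow binomial_eq_0)
      then have "real (n choose k) \<le> real (n ^ k)" by (simp only: of_nat_le_iff)
      then show ?thesis by simp
    qed
    then have "real (n choose k) * (1 - p) ^ (k choose 2) \<le> real n ^ k * (1 - p) ^ (k choose 2)"
      using q by (intro mult_right_mono) auto
    finally show ?thesis .
  qed
  have b2: "gnp_prob n p Sep \<le> real n * (1 + (1 - p) ^ ((n - k) div 2 - 1)) ^ n * (real k * real n ^ k) * (1 - p) ^ (n - k)"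
  proof -
    have "gnp_prob n p Sep \<le> real n * (1 + (1 - p) ^ ((n - k) div 2 - 1)) ^ n * real (card {S. S \<subseteq> {0..<n} \<and> card S < k}) * (1 - p) ^ (n - k)"
      unfolding Sep_def V_def by (rule sep_bound[OF p])
    also have "real (card {S. S \<subseteq> {0..<n} \<and> card S < k}) \<le> real k * real n ^ k"
    proof -
      have "card {S. S \<subseteq> {0..<n} \<and> card S < k} \<le> k * n ^ k" using card_SS[of n k] n3 by simp
      then have "real (card {S. S \<subseteq> {0..<n} \<and> card S < k}) \<le> real (k * n ^ k)" by (simp only: of_nat_le_iff)
      then show ?thesis by simp
    qed
    then have "real n * (1 + (1 - p) ^ ((n - k) div 2 - 1)) ^ n * real (card {S. S \<subseteq> {0..<n} \<and> card S < k}) * (1 - p) ^ (n - k)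
      \<le> real n * (1 + (1 - p) ^ ((n - k) div 2 - 1)) ^ n * (real k * real n ^ k) * (1 - p) ^ (n - k)"
      using q by (intro mult_right_mono mult_left_mono) auto
    finally show ?thesis .
  qed
  show ?thesis using main b1 b2 by linarith
qed

lemma lower_bound:
  fixes p :: real
  assumes p: "0 \<le> p" "p \<le> 1" and n3: "3 \<le> n"
  shows "(1 - p) ^ (n - 1) \<le> gnp_prob n p (\<lambda>E. \<not> hamiltonian n E)"
proof -
  define F0 where "F0 = (\<lambda>j. {0, j}) ` {1..<n}"
  have F0sub: "F0 \<subseteq> all_edges n"
  proof
    fix e assume "e \<in> F0"
    then obtain j where j: "1 \<le> j" "j < n" "e = {0, j}" unfolding F0_def by auto
    show "e \<in> all_edges n" unfolding all_edges_def using j by (intro CollectI exI[of _ 0] exI[of _ j]) auto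
  qed
  have "inj_on (\<lambda>j. {0::nat, j}) {1..<n}"
  proof (rule inj_onI)
    fix x y :: nat assume "x \<in> {1..<n}" "y \<in> {1..<n}" "{0, x} = {0, y}"
    then show "x = y" by (metis doubleton_eq_iff not_one_le_zero atLeastLessThan_iff)
  qed
  then have cF0: "card F0 = n - 1" unfolding F0_def by (simp add: card_image)
  have "(1 - p) ^ (n - 1) = gnp_prob n p (\<lambda>E. E \<inter> F0 = {})" using gnp_avoid[OF F0sub] cF0 by simp
  also have "\<dots> \<le> gnp_prob n p (\<lambda>E. \<not> hamiltonian n E)"
  proof (rule gnp_mono[OF p])
    fix E assume E: "E \<subseteq> all_edges n" and dis: "E \<inter> F0 = {}"
    show "\<not> hamiltonian n E"
    proof
      assume "hamiltonian n E"
      then obtain f where f: "bij_betw f {0..<n} {0..<n}" "\<forall>i<n. {f i, f ((i + 1) mod n)} \<in> E"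
        unfolding hamiltonian_def by blast
      have "0 \<in> f ` {0..<n}" using f(1) n3 unfolding bij_betw_def by auto
      then obtain i where i: "i < n" "f i = 0" by auto
      define j where "j = f ((i + 1) mod n)"
      have e: "{0, j} \<in> E" using f(2) i j_def by auto
      then have "0 \<noteq> j" "j < n" using edge_props[OF E e] by auto
      then have "{0, j} \<in> F0" unfolding F0_def by auto
      then show False using e dis by blast
    qed
  qed
  finally show ?thesis .
qed



lemma kfacts:
  fixes n :: nat
  assumes n64: "64 \<le> n"
  defines "k \<equiv> 3 * (nat \<lfloor>sqrt (real n)\<rfloor> + 1)"
  shows "3 * sqrt n \<le> real k" "real k \<le> 3 * sqrt n + 3" "2 * n \<le> k choose 2" "2 * k \<le> n" "2 \<le> k"
proof -
  define s where "s = nat \<lfloor>sqrt (real n)\<rfloor>"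
  have s1: "real s \<le> sqrt n" unfolding s_def by simp
  have s2: "sqrt n < real s + 1" unfolding s_def by linarith
  have kk: "real k = 3 * (real s + 1)" unfolding k_def s_def by simp
  show "3 * sqrt n \<le> real k" using kk s2 by simp
  show "real k \<le> 3 * sqrt n + 3" using kk s1 by simp
  show "2 \<le> k" unfolding k_def by simp
  have sq8: "8 \<le> sqrt n"
    by (rule real_le_rsqrt) (use n64 in simp)
  have nsq: "real n = sqrt n * sqrt n" by simp
  have "real n < (real s + 1) ^ 2"
  proof -
    have "sqrt n * sqrt n < (real s + 1) * (real s + 1)" using s2 by (intro mult_strict_mono) auto
    then show ?thesis using nsq by (simp add: power2_eq_square)
  qed
  moreover have "0 \<le> real s" "0 \<le> real s * real s" by simp_all
  moreover have "real k * (real k - 1) = 6 + 15 * real s + 9 * (real s * real s)" using kk by (simp add: algebra_simps)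
  moreover have "(real s + 1) ^ 2 = real s * real s + 2 * real s + 1" by (simp add: power2_eq_square algebra_simps)
  ultimately have "6 * real n < real k * (real k - 1)" by linarith
  moreover have "real k * (real k - 1) = real (k * (k - 1))" using \<open>2 \<le> k\<close> by (simp add: of_nat_diff)
  ultimately have "6 * n < k * (k - 1)" by linarith
  then show "2 * n \<le> k choose 2" by (simp add: choose_two)
  have "2 * real k \<le> real n"
  proof -
    have "2 * real k \<le> 6 * sqrt n + 6" using kk s1 by simp
    also have "\<dots> \<le> sqrt n * sqrt n"
    proof -
      have "8 * sqrt n \<le> sqrt n * sqrt n" using sq8 by (intro mult_right_mono) auto
      then show ?thesis using sq8 by linarith
    qed
    finally show ?thesis using nsq by simp
  qed
  then show "2 * k \<le> n" by linarith
qed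



lemma asym_core:
  fixes n :: nat and q L \<delta> Lm :: real
  assumes n64: "64 \<le> n" and \<delta>: "0 < \<delta>" "\<delta> < 1" and q: "0 < q" "q \<le> 1"
    and L: "L = - ln q" and Lm: "L \<le> Lm"
    and H1: "(10 + 6 * Lm) * sqrt n * ln n \<le> \<delta> * L * n"
    and H2: "8 * ln n \<le> L * n"
  defines "k \<equiv> 3 * (nat \<lfloor>sqrt (real n)\<rfloor> + 1)"
  shows "real n ^ k * q ^ (k choose 2)
     + real n * (1 + q ^ ((n - k) div 2 - 1)) ^ n * (real k * real n ^ k) * q ^ (n - k)
     \<le> exp (-(1 - \<delta>) * L * n)"
proof -
  note kf = kfacts[OF n64, folded k_def]
  have L0: "0 \<le> L" using L q by simp
  have n0: "0 < real n" using n64 by simp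
  have ln1: "1 \<le> ln (real n)"
  proof -
    have "exp 1 \<le> real n" using exp_le n64 by linarith
    then have "ln (exp 1) \<le> ln (real n)" using n0 by (subst ln_le_cancel_iff) auto
    then show ?thesis by simp
  qed
  have sq1: "1 \<le> sqrt (real n)" using n64 by simp
  have pw: "q ^ m = exp (- L * real m)" for m :: nat
  proof -
    have "exp (- L * real m) = exp (real m * ln q)" using L by (simp add: algebra_simps)
    also have "\<dots> = exp (ln q) ^ m" by (rule exp_of_nat_mult)
    also have "\<dots> = q ^ m" using q by simp
    finally show ?thesis by simp
  qed
  have nn: "real n ^ m = exp (ln (real n) * real m)" for m :: nat
  proof -
    have "exp (ln (real n) * real m) = exp (real m * ln (real n))" by (simp add: algebra_simps)
    also have "\<dots> = exp (ln (real n)) ^ m" by (rule exp_of_nat_mult)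
    also have "\<dots> = real n ^ m" using n0 by simp
    finally show ?thesis by simp
  qed
  have en: "real n = exp (ln (real n))" using n0 by simp
  have C: "2 + (real k + 2) * ln n + L * real k \<le> \<delta> * L * n"
  proof -
    have a: "(real k + 2) * ln n \<le> (3 * sqrt n + 5) * ln n" using kf(2) ln1 by (intro mult_right_mono) auto
    have b: "L * real k \<le> Lm * (3 * sqrt n + 3)"
      using kf(2) L0 Lm by (intro mult_mono) auto
    have Lm0: "0 \<le> Lm" using L0 Lm by simp
    have c: "2 \<le> 2 * sqrt n * ln n" using sq1 ln1
      by (metis mult_le_cancel_left1 mult_mono' mult_numeral_1 one_le_numeral order.trans zero_le_one linorder_not_le not_one_le_zero mult_le_cancel_right1)
    have d: "(3 * sqrt n + 5) * ln n \<le> 8 * sqrt n * ln n"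
      using sq1 ln1 by (intro mult_right_mono) auto
    have e: "Lm * (3 * sqrt n + 3) \<le> 6 * Lm * sqrt n * ln n"
    proof -
      have "Lm * (3 * sqrt n + 3) \<le> Lm * (6 * sqrt n)" using Lm0 sq1 by (intro mult_left_mono) auto
      also have "\<dots> \<le> Lm * (6 * sqrt n) * ln n" using Lm0 sq1 ln1
        by (metis mult_le_cancel_left1 mult_nonneg_nonneg order_trans zero_le_one zero_le_numeral le_numeral_extra(1) mult_le_cancel_right1 linorder_not_le not_one_le_zero)
      finally show ?thesis by (simp add: algebra_simps)
    qed
    have "2 + (real k + 2) * ln n + L * real k \<le> (10 + 6 * Lm) * sqrt n * ln n"
      using a b c d e by (simp add: algebra_simps)
    then show ?thesis using H1 by linarith
  qed
  have t1: "real n ^ k * q ^ (k choose 2) \<le> exp (-(1 - \<delta>) * L * n - 2)"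
  proof -
    have "q ^ (k choose 2) \<le> q ^ (2 * n)" using q kf(3) by (intro power_decreasing) auto
    then have "real n ^ k * q ^ (k choose 2) \<le> real n ^ k * q ^ (2 * n)" by (intro mult_left_mono) auto
    also have "\<dots> = exp (ln (real n) * real k) * exp (- L * real (2 * n))" by (simp only: nn pw)
    also have "\<dots> = exp (ln (real n) * real k - L * (2 * real n))" by (simp add: mult_exp_exp algebra_simps)
    also have "\<dots> \<le> exp (-(1 - \<delta>) * L * n - 2)"
    proof -
      have "0 \<le> L * real k" using L0 by simp
      moreover have "(real k + 2) * ln n = ln (real n) * real k + 2 * ln n" by (simp add: algebra_simps)
      ultimately have "ln (real n) * real k \<le> \<delta> * L * n - 2" using C ln1 by linarith
      moreover have "0 \<le> L * real n" using L0 by simp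
      ultimately show ?thesis by (simp add: algebra_simps)
    qed
    finally show ?thesis .
  qed
  define h where "h = (n - k) div 2 - 1"
  have h8: "real n \<le> 8 * real h"
  proof -
    have "n - k - 1 \<le> 2 * ((n - k) div 2)" by linarith
    then have "n \<le> 8 * h" unfolding h_def using kf(4) n64 by linarith
    then show ?thesis by linarith
  qed
  have xh: "real n * q ^ h \<le> 1"
  proof -
    have "L * real n \<le> L * (8 * real h)" using h8 L0 by (intro mult_left_mono)
    then have "L * real n \<le> 8 * (L * real h)" by (simp add: algebra_simps)
    then have "ln (real n) \<le> L * real h" using H2 by linarith
    then have "real n * q ^ h = exp (ln (real n) - L * real h)" by (simp add: pw exp_diff en[symmetric] field_simps exp_minus)
    also have "\<dots> \<le> 1" using \<open>ln (real n) \<le> L * real h\<close> by simp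
    finally show ?thesis .
  qed
  have pe: "(1 + q ^ h) ^ n \<le> exp 1"
  proof -
    have "(1 + q ^ h) ^ n \<le> exp (q ^ h) ^ n" using q by (intro power_mono) auto
    also have "\<dots> = exp (real n * q ^ h)" by (simp add: exp_of_nat_mult)
    also have "\<dots> \<le> exp 1" using xh by simp
    finally show ?thesis .
  qed
  have kn: "real k \<le> exp (ln (real n))" using kf(4) en by simp
  have t2: "real n * (1 + q ^ h) ^ n * (real k * real n ^ k) * q ^ (n - k) \<le> exp (-(1 - \<delta>) * L * n - 1)"
  proof -
    have "real n * (1 + q ^ h) ^ n * (real k * real n ^ k) * q ^ (n - k)
       \<le> exp (ln (real n)) * exp 1 * (exp (ln (real n)) * real n ^ k) * q ^ (n - k)"
      using pe kn en q by (intro mult_mono mult_right_mono mult_left_mono) auto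
    also have "\<dots> = exp (ln (real n)) * exp 1 * (exp (ln (real n)) * exp (ln (real n) * real k)) * exp (- L * real (n - k))"
      by (simp only: nn pw)
    also have "\<dots> = exp (ln (real n) + 1 + ln (real n) + ln (real n) * real k - L * real (n - k))"
      by (simp add: mult_exp_exp algebra_simps)
    also have "real (n - k) = real n - real k" using kf(4) by simp
    also have "exp (ln (real n) + 1 + ln (real n) + ln (real n) * real k - L * (real n - real k))
        \<le> exp (-(1 - \<delta>) * L * n - 1)"
      using C by (simp add: algebra_simps)
    finally show ?thesis .
  qed
  have "real n ^ k * q ^ (k choose 2) + real n * (1 + q ^ h) ^ n * (real k * real n ^ k) * q ^ (n - k)
     \<le> exp (-(1 - \<delta>) * L * n - 2) + exp (-(1 - \<delta>) * L * n - 1)" using t1 t2 by linarith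
  also have "\<dots> = exp (-(1 - \<delta>) * L * n) * (exp (-2) + exp (-1))" by (simp only: distrib_left mult_exp_exp diff_conv_add_uminus)
  also have "\<dots> \<le> exp (-(1 - \<delta>) * L * n)"
  proof -
    have e1: "exp (-1::real) \<le> 1/2"
    proof -
      have "2 \<le> exp (1::real)" using exp_ge_add_one_self[of 1] by simp
      then show ?thesis by (simp add: exp_minus field_simps)
    qed
    have "exp (-2::real) \<le> exp (-1)" by simp
    then have "exp (-2) + exp (-1) \<le> (1::real)" using e1 by linarith
    then show ?thesis by (intro mult_right_le_one_le) auto
  qed
  finally show ?thesis unfolding h_def .
qed



theorem corollary7:
  fixes p :: "nat \<Rightarrow> real" and \<epsilon> :: real
  assumes "0 < \<epsilon>" and "\<epsilon> < 1"
    and "\<And>n. 0 \<le> p n \<and> p n \<le> 1 - \<epsilon>"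
    and "filterlim (\<lambda>n. p n * sqrt (real n) / ln (real n)) at_top sequentially"
  shows "\<exists>g :: nat \<Rightarrow> real. g \<longlonglongrightarrow> 0 \<and>
           (\<forall>\<^sub>F n in sequentially.
              gnp_prob n (p n) (\<lambda>E. \<not> hamiltonian n E) = (1 - p n) powr ((1 + g n) * real n))"
proof -
  note eps = assms(1,2) and pb = assms(3) and lim = assms(4)
  define r where "r = (\<lambda>n. p n * sqrt (real n) / ln (real n))"
  define q where "q = (\<lambda>n. 1 - p n)"
  define L where "L = (\<lambda>n. - ln (q n))"
  define Lm where "Lm = - ln \<epsilon>"
  define P where "P = (\<lambda>n. gnp_prob n (p n) (\<lambda>E. \<not> hamiltonian n E))"
  define g where "g = (\<lambda>n. ln (P n) / (real n * ln (q n)) - 1)"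
  have p01: "0 \<le> p n" "p n \<le> 1" for n using pb[of n] eps by auto
  have qpos: "\<epsilon> \<le> q n" "0 < q n" "q n \<le> 1" for n using pb[of n] eps unfolding q_def by auto
  have L0: "0 \<le> L n" for n unfolding L_def using qpos[of n] by simp
  have LLm: "L n \<le> Lm" for n unfolding L_def Lm_def using qpos[of n] eps by simp
  have pL: "p n \<le> L n" for n
  proof -
    have "ln (q n) \<le> q n - 1" using qpos[of n] by (intro ln_le_minus_one) auto
    then show ?thesis unfolding L_def q_def by simp
  qed
  have rlim: "\<forall>\<^sub>F n in sequentially. M \<le> r n" for M
    using lim unfolding r_def filterlim_at_top by blast
  have low: "q n ^ (n - 1) \<le> P n" if "3 \<le> n" for n
    unfolding P_def q_def using lower_bound[OF p01 that] .
  have Ppos: "0 < P n" if "3 \<le> n" for n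
    using low[OF that] qpos[of n] by (meson less_le_trans zero_less_power)
  have rel: "p n * real n = r n * (sqrt (real n) * ln (real n))" if "3 \<le> n" for n
  proof -
    have "0 < ln (real n)" using that by simp
    moreover have "sqrt (real n) * sqrt (real n) = real n" by simp
    ultimately show ?thesis unfolding r_def by (simp add: field_simps)
  qed
  have ev_pos: "\<forall>\<^sub>F n in sequentially. 3 \<le> n \<and> 0 < p n"
  proof -
    have "\<forall>\<^sub>F n in sequentially. 3 \<le> n \<and> 1 \<le> r n"
      using rlim[of 1] eventually_ge_at_top[of 3] by eventually_elim auto
    then show ?thesis
    proof eventually_elim
      case (elim n)
      then have "0 < r n * (sqrt (real n) * ln (real n))" by simp
      then have "0 < p n * real n" using rel elim by simp
      then show ?case using elim p01[of n] by (simp add: zero_less_mult_iff)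
    qed
  qed
  have eq: "\<forall>\<^sub>F n in sequentially. P n = (1 - p n) powr ((1 + g n) * real n)"
    using ev_pos
  proof eventually_elim
    case (elim n)
    have lq: "ln (q n) < 0" using elim qpos[of n] unfolding q_def by simp
    have "(1 + g n) * real n = ln (P n) / ln (q n)" unfolding g_def using elim lq by (simp add: field_simps)
    then have "(1 - p n) powr ((1 + g n) * real n) = exp (ln (P n) / ln (q n) * ln (q n))"
      using qpos[of n] unfolding q_def by (simp add: powr_def)
    also have "\<dots> = P n" using lq Ppos[of n] elim by simp
    finally show ?case by simp
  qed
  have conv: "g \<longlonglongrightarrow> 0"
  proof (rule tendstoI)
    fix e :: real assume e: "0 < e"
    define \<delta> where "\<delta> = min (e / 2) (1 / 2)"
    have \<delta>: "0 < \<delta>" "\<delta> < 1" "\<delta> < e" unfolding \<delta>_def using e by auto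
    define M where "M = max 8 ((10 + 6 * Lm) / \<delta>)"
    have ev: "\<forall>\<^sub>F n in sequentially. 64 \<le> n \<and> M \<le> r n"
      using rlim[of M] eventually_ge_at_top[of 64] by eventually_elim auto
    then show "\<forall>\<^sub>F n in sequentially. dist (g n) 0 < e"
    proof eventually_elim
      case (elim n)
      have n3: "3 \<le> n" using elim by simp
      have ln0: "0 < ln (real n)" using n3 by simp
      have sq1: "1 \<le> sqrt (real n)" using n3 by simp
      have sl0: "0 \<le> sqrt (real n) * ln (real n)" using ln0 by simp
      have r8: "8 \<le> r n" "(10 + 6 * Lm) / \<delta> \<le> r n" using elim unfolding M_def by auto
      have dr: "10 + 6 * Lm \<le> \<delta> * r n" using r8(2) \<delta> by (simp add: pos_divide_le_eq mult.commute)
      have pn: "p n * real n \<le> L n * real n" using pL[of n] by (intro mult_right_mono) auto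
      have H2: "8 * ln (real n) \<le> L n * real n"
      proof -
        have "8 * ln (real n) \<le> r n * ln (real n)" using r8 ln0 by (intro mult_right_mono) auto
        also have "\<dots> \<le> r n * (sqrt (real n) * ln (real n))" using sq1 ln0 r8
          by (intro mult_left_mono) auto
        also have "\<dots> = p n * real n" using rel[OF n3] by simp
        finally show ?thesis using pn by linarith
      qed
      have H1: "(10 + 6 * Lm) * sqrt (real n) * ln (real n) \<le> \<delta> * L n * real n"
      proof -
        have "(10 + 6 * Lm) * (sqrt (real n) * ln (real n)) \<le> (\<delta> * r n) * (sqrt (real n) * ln (real n))"
          using dr sl0 by (intro mult_right_mono) auto
        also have "\<dots> = \<delta> * (p n * real n)" using rel[OF n3] by simp
        also have "\<dots> \<le> \<delta> * (L n * real n)" using pn \<delta> by (intro mult_left_mono) auto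
        finally show ?thesis by (simp add: algebra_simps)
      qed
      define k where "k = 3 * (nat \<lfloor>sqrt (real n)\<rfloor> + 1)"
      have k2: "2 \<le> k" unfolding k_def by simp
      have up: "P n \<le> exp (-(1 - \<delta>) * L n * n)"
      proof -
        have "P n \<le> real n ^ k * (1 - p n) ^ (k choose 2)
          + real n * (1 + (1 - p n) ^ ((n - k) div 2 - 1)) ^ n * (real k * real n ^ k) * (1 - p n) ^ (n - k)"
          unfolding P_def by (rule upper_bound[OF p01 n3 k2])
        also have "\<dots> \<le> exp (-(1 - \<delta>) * L n * n)"
        proof -
          have A: "real n ^ k * q n ^ (k choose 2)
            + real n * (1 + q n ^ ((n - k) div 2 - 1)) ^ n * (real k * real n ^ k) * q n ^ (n - k)
            \<le> exp (-(1 - \<delta>) * L n * n)"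
            unfolding k_def
            by (rule asym_core[of n \<delta> "q n" "L n" Lm]) (use elim \<delta> qpos LLm H1 H2 L_def in auto)
          then show ?thesis unfolding q_def .
        qed
        finally show ?thesis .
      qed
      have Ln0: "0 < L n" using L0[of n] H2 ln0 by (metis le_less_trans less_eq_real_def mult_eq_0_iff mult_pos_pos zero_less_numeral not_le)
      have lnP_up: "ln (P n) \<le> -(1 - \<delta>) * L n * n"
      proof -
        have "ln (P n) \<le> ln (exp (-(1 - \<delta>) * L n * n))" using up Ppos[OF n3] by (subst ln_le_cancel_iff) auto
        then show ?thesis by simp
      qed
      have lnP_low: "- (real n - 1) * L n \<le> ln (P n)"
      proof -
        have "ln (q n ^ (n - 1)) \<le> ln (P n)" using low[OF n3] qpos[of n] Ppos[OF n3] by (subst ln_le_cancel_iff) auto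
        moreover have "ln (q n ^ (n - 1)) = real (n - 1) * ln (q n)" using qpos[of n] by (simp add: ln_realpow)
        moreover have "real (n - 1) = real n - 1" using n3 by simp
        ultimately show ?thesis unfolding L_def by (simp add: algebra_simps)
      qed
      have gn: "g n = ln (P n) / (- (L n * real n)) - 1" unfolding g_def L_def by simp
      have Lnpos: "0 < L n * real n" using Ln0 n3 by simp
      define t where "t = (- ln (P n)) / (L n * real n)"
      have gt: "g n = t - 1" unfolding gn t_def by (simp add: divide_minus_right)
      have g1: "- \<delta> \<le> g n"
      proof -
        have "(1 - \<delta>) * (L n * real n) \<le> - ln (P n)" using lnP_up by (simp add: algebra_simps)
        then have "1 - \<delta> \<le> t" unfolding t_def using Lnpos by (subst pos_le_divide_eq) auto
        then show ?thesis unfolding gt by simp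
      qed
      have g2: "g n \<le> 0"
      proof -
        have "- ln (P n) \<le> (real n - 1) * L n" using lnP_low by (simp add: algebra_simps)
        also have "\<dots> \<le> L n * real n" using L0[of n] by (simp add: algebra_simps)
        finally have "t \<le> 1" unfolding t_def using Lnpos by (subst pos_divide_le_eq) auto
        then show ?thesis unfolding gt by simp
      qed
      show ?case using g1 g2 \<delta> by (simp add: dist_real_def abs_if)
    qed
  qed
  show ?thesis using conv eq unfolding P_def by blast
qed


end
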